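(* If $G$ is a connected graph of order $n$ with minimum degree $\delta(G)\ge (n-2)/3$, then $G$ is detour covered.
   Context: All graphs are finite and simple. A detour of a graph is a longest path in it. A graph is detour covered if every vertex lies in some detour. *)

theory Defs
  imports Main
begin

definition simple_graph :: "'a set \<Rightarrow> ('a \<Rightarrow> 'a \<Rightarrow> bool) \<Rightarrow> bool" where
  "simple_graph V E \<longleftrightarrow> finite V \<and> V \<noteq> {} \<and>
     (\<forall>u v. E u v \<longrightarrow> u \<in> V \<and> v \<in> V) \<and>
     (\<forall>u v. E u v \<longrightarrow> E v u) \<and> (\<forall>v. \<not> E v v)"

definition degree :: "'a set \<Rightarrow> ('a \<Rightarrow> 'a \<Rightarrow> bool) \<Rightarrow> 'a \<Rightarrow> nat" where
  "degree V E v = card {u \<in> V. E v u}"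

definition is_path :: "'a set \<Rightarrow> ('a \<Rightarrow> 'a \<Rightarrow> bool) \<Rightarrow> 'a list \<Rightarrow> bool" where
  "is_path V E p \<longleftrightarrow> p \<noteq> [] \<and> set p \<subseteq> V \<and> distinct p \<and>
     (\<forall>i. Suc i < length p \<longrightarrow> E (p ! i) (p ! Suc i))"

definition path_len :: "'a list \<Rightarrow> nat" where
  "path_len p = length p - 1"

definition connected :: "'a set \<Rightarrow> ('a \<Rightarrow> 'a \<Rightarrow> bool) \<Rightarrow> bool" where
  "connected V E \<longleftrightarrow> (\<forall>u\<in>V. \<forall>v\<in>V. \<exists>p. is_path V E p \<and> hd p = u \<and> last p = v)"

definition detour :: "'a set \<Rightarrow> ('a \<Rightarrow> 'a \<Rightarrow> bool) \<Rightarrow> 'a list \<Rightarrow> bool" where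
  "detour V E p \<longleftrightarrow> is_path V E p \<and> (\<forall>q. is_path V E q \<longrightarrow> path_len q \<le> path_len p)"

definition detour_covered :: "'a set \<Rightarrow> ('a \<Rightarrow> 'a \<Rightarrow> bool) \<Rightarrow> bool" where
  "detour_covered V E \<longleftrightarrow> (\<forall>v\<in>V. \<exists>p. detour V E p \<and> v \<in> set p)"

end

theory Submission
  imports Defs
begin

lemma last_take_Suc: "i < length xs \<Longrightarrow> last (take (Suc i) xs) = xs ! i"
  by (simp add: take_Suc_conv_app_nth)

lemma first_entry:
  assumes "p \<noteq> []" "hd p \<notin> S" "last p \<in> S"
  shows "\<exists>k. Suc k < length p \<and> p ! k \<notin> S \<and> p ! Suc k \<in> S"
  using assms
proof (induction p)
  case Nil then show ?case by simp
next
  case (Cons a p)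
  show ?case
  proof (cases "p = []")
    case True then show ?thesis using Cons.prems by simp
  next
    case False
    show ?thesis
    proof (cases "hd p \<in> S")
      case True
      then show ?thesis using Cons.prems False
        by (rule_tac x=0 in exI) (auto simp: hd_conv_nth)
    next
      case nf: False
      have "last p \<in> S" using Cons.prems False by simp
      then obtain k where "Suc k < length p" "p ! k \<notin> S" "p ! Suc k \<in> S"
        using Cons.IH False nf by blast
      then show ?thesis by (rule_tac x="Suc k" in exI) auto
    qed
  qed
qed

context
  fixes V :: "'a set" and E :: "'a \<Rightarrow> 'a \<Rightarrow> bool"
  assumes sg: "simple_graph V E"
begin

lemma finV: "finite V" using sg by (simp add: simple_graph_def)
lemma EV: "E u w \<Longrightarrow> u \<in> V \<and> w \<in> V" using sg by (simp add: simple_graph_def)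
lemma Esym: "E u w \<Longrightarrow> E w u" using sg by (simp add: simple_graph_def)
lemma Eirr: "\<not> E u u" using sg by (simp add: simple_graph_def)

lemma path_single: "u \<in> V \<Longrightarrow> is_path V E [u]"
  by (simp add: is_path_def)

lemma path_append:
  assumes "is_path V E xs" "is_path V E ys" "set xs \<inter> set ys = {}" "E (last xs) (hd ys)"
  shows "is_path V E (xs @ ys)"
  unfolding is_path_def
proof (intro conjI allI impI)
  show "xs @ ys \<noteq> []" using assms(1) by (simp add: is_path_def)
  show "set (xs @ ys) \<subseteq> V" using assms(1,2) by (simp add: is_path_def)
  show "distinct (xs @ ys)" using assms(1-3) by (simp add: is_path_def)
  fix i assume i: "Suc i < length (xs @ ys)"
  have xs: "xs \<noteq> []" "\<forall>i. Suc i < length xs \<longrightarrow> E (xs ! i) (xs ! Suc i)"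
    using assms(1) by (auto simp: is_path_def)
  have ys: "ys \<noteq> []" "\<forall>i. Suc i < length ys \<longrightarrow> E (ys ! i) (ys ! Suc i)"
    using assms(2) by (auto simp: is_path_def)
  consider "Suc i < length xs" | "Suc i = length xs" | "length xs \<le> i" by linarith
  then show "E ((xs @ ys) ! i) ((xs @ ys) ! Suc i)"
  proof cases
    case 1 then show ?thesis using xs by (simp add: nth_append)
  next
    case 2
    then have "i = length xs - 1" by simp
    then have "(xs @ ys) ! i = last xs" using xs 2 by (simp add: nth_append last_conv_nth)
    moreover have "(xs @ ys) ! Suc i = hd ys" using 2 ys by (simp add: nth_append hd_conv_nth)
    ultimately show ?thesis using assms(4) by simp
  next
    case 3
    then have "Suc (i - length xs) < length ys" using i by simp
    then have "E (ys ! (i - length xs)) (ys ! Suc (i - length xs))" using ys by blast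
    moreover have "Suc i - length xs = Suc (i - length xs)" using 3 by simp
    ultimately show ?thesis using 3 by (simp add: nth_append)
  qed
qed

lemma path_rev:
  assumes "is_path V E xs" shows "is_path V E (rev xs)"
  unfolding is_path_def
proof (intro conjI allI impI)
  show "rev xs \<noteq> []" "set (rev xs) \<subseteq> V" "distinct (rev xs)"
    using assms by (auto simp: is_path_def)
  fix i assume i: "Suc i < length (rev xs)"
  let ?n = "length xs"
  have "Suc (?n - Suc (Suc i)) < ?n" using i by simp
  then have "E (xs ! (?n - Suc (Suc i))) (xs ! Suc (?n - Suc (Suc i)))"
    using assms by (auto simp: is_path_def)
  moreover have "Suc (?n - Suc (Suc i)) = ?n - Suc i" using i by simp
  ultimately have "E (xs ! (?n - Suc i)) (xs ! (?n - Suc (Suc i)))" using Esym by simp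
  then show "E (rev xs ! i) (rev xs ! Suc i)" using i by (simp add: rev_nth)
qed

lemma path_take:
  assumes "is_path V E xs" "0 < k" shows "is_path V E (take k xs)"
  using assms unfolding is_path_def
  by (auto dest: in_set_takeD)

lemma path_drop:
  assumes "is_path V E xs" "k < length xs" shows "is_path V E (drop k xs)"
  using assms unfolding is_path_def
  by (auto dest: in_set_dropD)

lemma path_len_le: "is_path V E p \<Longrightarrow> length p \<le> card V"
  unfolding is_path_def using finV
  by (metis card_mono distinct_card)

lemma exists_max_path:
  assumes "is_path V E p0" "\<Phi> p0"
  shows "\<exists>p. is_path V E p \<and> \<Phi> p \<and> (\<forall>q. is_path V E q \<and> \<Phi> q \<longrightarrow> length q \<le> length p)"
proof -
  define S where "S = {length q | q. is_path V E q \<and> \<Phi> q}"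
  have sub: "S \<subseteq> {..card V}"
  proof
    fix x assume "x \<in> S"
    then obtain q where "x = length q" "is_path V E q" unfolding S_def by blast
    then have "x \<le> card V" using path_len_le by blast
    then show "x \<in> {..card V}" by simp
  qed
  have fin: "finite S" by (rule finite_subset[OF sub]) simp
  have "length p0 \<in> S" using assms unfolding S_def by blast
  then have "S \<noteq> {}" by blast
  then have "Max S \<in> S" using Max_in[OF fin] by blast
  then have "\<exists>p. is_path V E p \<and> \<Phi> p \<and> length p = Max S" unfolding S_def by auto
  then obtain p where p: "is_path V E p" "\<Phi> p" "length p = Max S" by blast
  have "length q \<le> length p" if "is_path V E q" "\<Phi> q" for q
  proof -
    have "length q \<in> S" using that unfolding S_def by blast
    then have "length q \<le> Max S" using Max_ge[OF fin] by blast
    then show ?thesis using p(3) by simp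
  qed
  then show ?thesis using p by blast
qed

lemma path_rotate:
  assumes "is_path V E C" "E (last C) (hd C)" "s < length C"
  shows "is_path V E (drop s C @ take s C)"
proof (cases "s = 0")
  case True then show ?thesis using assms by simp
next
  case False
  have d: "distinct C" using assms(1) by (simp add: is_path_def)
  show ?thesis
  proof (rule path_append)
    show "is_path V E (drop s C)" by (rule path_drop[OF assms(1) assms(3)])
    show "is_path V E (take s C)" using False by (intro path_take[OF assms(1)]) simp
    have "set (take s C) \<inter> set (drop s C) = {}"
      using set_take_disj_set_drop_if_distinct[OF d, of s s] by simp
    then show "set (drop s C) \<inter> set (take s C) = {}" by (simp add: Int_commute)
    have "last (drop s C) = last C" using assms(3) by simp
    moreover have "hd (take s C) = hd C" using False by simp
    ultimately show "E (last (drop s C)) (hd (take s C))" using assms(2) by simp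
  qed
qed

lemma crossing_extend:
  assumes conn: "connected V E" and Q: "is_path V E Q" and w0: "w0 \<in> V" "w0 \<notin> set Q"
    and i: "Suc i < length Q" and ea: "E (hd Q) (Q ! Suc i)" and eb: "E (last Q) (Q ! i)"
  shows "\<exists>Q'. is_path V E Q' \<and> set Q \<subseteq> set Q' \<and> length Q' = Suc (length Q)"
proof -
  have d: "distinct Q" and Qne: "Q \<noteq> []" using Q by (auto simp: is_path_def)
  define C where "C = take (Suc i) Q @ rev (drop (Suc i) Q)"
  have Cp: "is_path V E C" unfolding C_def
  proof (rule path_append)
    show "is_path V E (take (Suc i) Q)" by (rule path_take[OF Q]) simp
    show "is_path V E (rev (drop (Suc i) Q))" using i by (intro path_rev path_drop[OF Q]) simp
    show "set (take (Suc i) Q) \<inter> set (rev (drop (Suc i) Q)) = {}"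
      using set_take_disj_set_drop_if_distinct[OF d, of "Suc i" "Suc i"] by simp
    have "E (Q ! i) (last Q)" using Esym[OF eb] .
    then show "E (last (take (Suc i) Q)) (hd (rev (drop (Suc i) Q)))"
      using i by (simp add: last_take_Suc hd_rev)
  qed
  have "set C = set (take (Suc i) Q) \<union> set (drop (Suc i) Q)" unfolding C_def by simp
  also have "\<dots> = set Q" by (simp only: set_append[symmetric] append_take_drop_id)
  finally have setC: "set C = set Q" .
  have lenC: "length C = length Q" unfolding C_def using i by simp
  have hdC: "hd C = hd Q" unfolding C_def using Qne by (cases Q) auto
  have lastC: "last C = Q ! Suc i" unfolding C_def using i
    by (simp add: last_rev hd_drop_conv_nth)
  have cyc: "E (last C) (hd C)" using hdC lastC Esym[OF ea] by simp
  have hQV: "hd Q \<in> V" using Q Qne by (auto simp: is_path_def)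
  obtain p where p: "is_path V E p" "hd p = w0" "last p = hd Q"
    using conn w0(1) hQV unfolding connected_def by blast
  have "p \<noteq> []" using p by (simp add: is_path_def)
  moreover have "hd p \<notin> set Q" using p(2) w0(2) by simp
  moreover have "last p \<in> set Q" using p(3) Qne by simp
  ultimately obtain k where k: "Suc k < length p" "p ! k \<notin> set Q" "p ! Suc k \<in> set Q"
    using first_entry[of p "set Q"] by blast
  let ?x = "p ! k" and ?y = "p ! Suc k"
  have exy: "E ?x ?y" using p(1) k(1) by (simp add: is_path_def)
  have xV: "?x \<in> V" using EV exy by blast
  obtain s where s: "s < length C" "C ! s = ?y" using k(3) setC by (metis in_set_conv_nth)
  define Rt where "Rt = drop s C @ take s C"
  have Rtp: "is_path V E Rt" unfolding Rt_def using path_rotate Cp cyc s by blast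
  have "set Rt = set (take s C) \<union> set (drop s C)" unfolding Rt_def by auto
  also have "\<dots> = set C" by (simp only: set_append[symmetric] append_take_drop_id)
  finally have setRt: "set Rt = set C" .
  have hdRt: "hd Rt = ?y" unfolding Rt_def using s by (simp add: hd_drop_conv_nth)
  have lenRt: "length Rt = length Q" unfolding Rt_def using lenC s by simp
  have "is_path V E ([?x] @ Rt)"
  proof (rule path_append)
    show "is_path V E [?x]" using path_single xV by blast
    show "is_path V E Rt" using Rtp .
    show "set [?x] \<inter> set Rt = {}" using setRt setC k(2) by simp
    show "E (last [?x]) (hd Rt)" using hdRt exy by simp
  qed
  then show ?thesis using setRt setC lenRt by auto
qed

lemma path3:
  assumes "is_path V E A" "is_path V E B" "is_path V E C"
    "set A \<inter> set B = {}" "set A \<inter> set C = {}" "set B \<inter> set C = {}"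
    "E (last A) (hd B)" "E (last B) (hd C)"
  shows "is_path V E (A @ B @ C)"
proof -
  have BC: "is_path V E (B @ C)" using path_append assms by blast
  have "B \<noteq> []" using assms(2) by (simp add: is_path_def)
  then have "hd (B @ C) = hd B" by simp
  then show ?thesis using path_append[OF assms(1) BC] assms by auto
qed

lemma main_contra:
  assumes conn: "connected V E"
    and P: "is_path V E P" and Plong: "\<forall>Z. is_path V E Z \<longrightarrow> length Z \<le> length P"
    and vV: "v \<in> V"
    and short: "\<forall>Z. is_path V E Z \<and> v \<in> set Z \<longrightarrow> length Z < length P"
    and deg: "\<forall>u\<in>V. \<delta> \<le> degree V E u" and nV: "card V \<le> 3*\<delta>+2"
  shows False
proof -
  have dP: "distinct P" "set P \<subseteq> V" "P \<noteq> []" using P by (auto simp: is_path_def)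
  have vP: "v \<notin> set P" using short P by blast
  define lP where "lP = length P"
  have cardP: "card (set P) = lP" using dP distinct_card lP_def by blast
  have cardPV: "lP \<le> card V" using path_len_le P lP_def by blast
  obtain Q where Q: "is_path V E Q" "v \<in> set Q"
    and Qmax: "\<forall>Z. is_path V E Z \<and> v \<in> set Z \<longrightarrow> length Z \<le> length Q"
    using exists_max_path[of "[v]" "\<lambda>Z. v \<in> set Z"] path_single vV by auto
  define q where "q = length Q"
  have qlt: "q < lP" using short Q q_def lP_def by blast
  have dQ: "distinct Q" "Q \<noteq> []" "set Q \<subseteq> V" using Q by (auto simp: is_path_def)
  have nbA: "\<forall>w. E (hd Q) w \<longrightarrow> w \<in> set Q"
  proof (intro allI impI, rule ccontr)
    fix w assume w: "E (hd Q) w" "w \<notin> set Q"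
    have "is_path V E ([w] @ Q)"
    proof (rule path_append)
      show "is_path V E [w]" using path_single EV[OF w(1)] by blast
      show "is_path V E Q" using Q(1) .
      show "set [w] \<inter> set Q = {}" using w(2) by simp
      show "E (last [w]) (hd Q)" using Esym[OF w(1)] by simp
    qed
    then have "length ([w]@Q) \<le> length Q" using Qmax Q by auto
    then show False by simp
  qed
  have nbB: "\<forall>w. E (last Q) w \<longrightarrow> w \<in> set Q"
  proof (intro allI impI, rule ccontr)
    fix w assume w: "E (last Q) w" "w \<notin> set Q"
    have "is_path V E (Q @ [w])"
    proof (rule path_append)
      show "is_path V E [w]" using path_single EV[OF w(1)] by blast
      show "is_path V E Q" using Q(1) .
      show "set Q \<inter> set [w] = {}" using w(2) by simp
      show "E (last Q) (hd [w])" using w(1) by simp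
    qed
    then have "length (Q @ [w]) \<le> length Q" using Qmax Q by auto
    then show False by simp
  qed
  have wout: "\<exists>w0. w0 \<in> V \<and> w0 \<notin> set Q"
  proof (rule ccontr)
    assume "\<not> ?thesis"
    then have "V \<subseteq> set Q" by blast
    then have "card V \<le> card (set Q)" by (simp add: card_mono)
    also have "\<dots> = q" using dQ distinct_card q_def by blast
    finally show False using qlt cardPV by simp
  qed
  have nocross: "\<not> (\<exists>i. Suc i < q \<and> E (hd Q) (Q ! Suc i) \<and> E (last Q) (Q ! i))"
  proof
    assume "\<exists>i. Suc i < q \<and> E (hd Q) (Q ! Suc i) \<and> E (last Q) (Q ! i)"
    then obtain i where "Suc i < length Q" "E (hd Q) (Q ! Suc i)" "E (last Q) (Q ! i)"
      using q_def by blast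
    then obtain Q' where "is_path V E Q'" "set Q \<subseteq> set Q'" "length Q' = Suc (length Q)"
      using crossing_extend[OF conn Q(1)] wout by blast
    then have "is_path V E Q' \<and> v \<in> set Q'" using Q(2) by blast
    then have "length Q' \<le> length Q" using Qmax by blast
    then show False using \<open>length Q' = Suc (length Q)\<close> by simp
  qed
  define Sa where "Sa = {i. Suc i < q \<and> E (hd Q) (Q ! Suc i)}"
  define Sb where "Sb = {i. Suc i < q \<and> E (last Q) (Q ! i)}"
  have finSa: "finite Sa" by (rule finite_subset[of _ "{..<q}"]) (auto simp: Sa_def)
  have finSb: "finite Sb" by (rule finite_subset[of _ "{..<q}"]) (auto simp: Sb_def)
  have "{w\<in>V. E (hd Q) w} \<subseteq> (\<lambda>i. Q ! Suc i) ` Sa"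
  proof
    fix w assume "w \<in> {w\<in>V. E (hd Q) w}"
    then have e: "E (hd Q) w" by simp
    then have "w \<in> set Q" using nbA by blast
    then obtain k where k: "k < q" "Q ! k = w" by (metis in_set_conv_nth q_def)
    have "k \<noteq> 0"
    proof
      assume "k = 0"
      then have "E (Q ! 0) (Q ! 0)" using e k dQ(2) by (simp add: hd_conv_nth)
      then show False using Eirr by blast
    qed
    then obtain i where "k = Suc i" by (cases k) auto
    then show "w \<in> (\<lambda>i. Q ! Suc i) ` Sa" using k e Sa_def by auto
  qed
  then have da: "degree V E (hd Q) \<le> card Sa" unfolding degree_def
    by (meson card_image_le card_mono finSa finite_imageI order_trans)
  have "{w\<in>V. E (last Q) w} \<subseteq> (\<lambda>i. Q ! i) ` Sb"
  proof
    fix w assume "w \<in> {w\<in>V. E (last Q) w}"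
    then have e: "E (last Q) w" by simp
    then have "w \<in> set Q" using nbB by blast
    then obtain k where k: "k < q" "Q ! k = w" by (metis in_set_conv_nth q_def)
    have "k \<noteq> q - 1" using e k Eirr dQ by (auto simp: last_conv_nth q_def)
    then have "Suc k < q" using k by simp
    then show "w \<in> (\<lambda>i. Q ! i) ` Sb" using k e Sb_def by auto
  qed
  then have db: "degree V E (last Q) \<le> card Sb" unfolding degree_def
    by (meson card_image_le card_mono finSb finite_imageI order_trans)
  have "Sa \<inter> Sb = {}" using nocross by (auto simp: Sa_def Sb_def)
  then have "card Sa + card Sb = card (Sa \<union> Sb)" using finSa finSb by (simp add: card_Un_disjoint)
  also have "\<dots> \<le> card {..<q-1}" by (rule card_mono) (auto simp: Sa_def Sb_def)
  finally have sab: "card Sa + card Sb \<le> q - 1" by simp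
  have "hd Q \<in> V" "last Q \<in> V" using dQ by auto
  then have "\<delta> \<le> degree V E (hd Q)" "\<delta> \<le> degree V E (last Q)" using deg by auto
  moreover have "1 \<le> q" using dQ q_def by (cases Q) auto
  ultimately have q2: "2*\<delta> + 1 \<le> q" using da db sab by arith
  define R where "R = V - set P"
  have vR: "v \<in> R" using vV vP R_def by blast
  obtain T where T: "is_path V E T" "set T \<subseteq> R" "v \<in> set T"
    and Tmax: "\<forall>Z. is_path V E Z \<and> (set Z \<subseteq> R \<and> v \<in> set Z) \<longrightarrow> length Z \<le> length T"
    using exists_max_path[of "[v]" "\<lambda>Z. set Z \<subseteq> R \<and> v \<in> set Z"] path_single vV vR by auto
  define m where "m = length T"
  have dT: "distinct T" "T \<noteq> []" "set T \<subseteq> V" using T by (auto simp: is_path_def)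
  have m1: "1 \<le> m" using dT m_def by (cases T) auto
  have TP: "set T \<inter> set P = {}" using T R_def by blast
  have "card (set P \<union> set T) = lP + m"
    using TP cardP dT distinct_card m_def by (metis Int_commute card_Un_disjoint finite_set)
  moreover have "card (set P \<union> set T) \<le> card V" using dP dT finV by (simp add: card_mono)
  ultimately have lm: "lP + m \<le> card V" by simp
  have mle: "m \<le> \<delta>" using lm nV q2 qlt by linarith
  have hT: "hd T \<in> set T" "last T \<in> set T" using dT by auto
  have hTP: "hd T \<notin> set P" "last T \<notin> set P" using hT TP by auto
  have nb1: "\<forall>w. E (hd T) w \<longrightarrow> w \<in> set T \<or> w \<in> set P"
  proof (intro allI impI, rule ccontr)
    fix w assume w: "E (hd T) w" "\<not> (w \<in> set T \<or> w \<in> set P)"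
    have "is_path V E ([w] @ T)"
    proof (rule path_append)
      show "is_path V E [w]" using path_single EV[OF w(1)] by blast
      show "is_path V E T" using T(1) .
      show "set [w] \<inter> set T = {}" using w(2) by simp
      show "E (last [w]) (hd T)" using Esym[OF w(1)] by simp
    qed
    moreover have "set ([w] @ T) \<subseteq> R" using w EV T R_def by auto
    ultimately have "length ([w]@T) \<le> length T" using Tmax[rule_format, of "[w]@T"] T by auto
    then show False by simp
  qed
  have nbm: "\<forall>w. E (last T) w \<longrightarrow> w \<in> set T \<or> w \<in> set P"
  proof (intro allI impI, rule ccontr)
    fix w assume w: "E (last T) w" "\<not> (w \<in> set T \<or> w \<in> set P)"
    have "is_path V E (T @ [w])"
    proof (rule path_append)
      show "is_path V E [w]" using path_single EV[OF w(1)] by blast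
      show "is_path V E T" using T(1) .
      show "set T \<inter> set [w] = {}" using w(2) by simp
      show "E (last T) (hd [w])" using w(1) by simp
    qed
    moreover have "set (T @ [w]) \<subseteq> R" using w EV T R_def by auto
    ultimately have "length (T @ [w]) \<le> length T" using Tmax[rule_format, of "T @ [w]"] T by auto
    then show False by simp
  qed
  define I where "I = {i. i < lP \<and> E (hd T) (P ! i)}"
  define J where "J = {j. j < lP \<and> E (last T) (P ! j)}"
  have finI: "finite I" by (rule finite_subset[of _ "{..<lP}"]) (auto simp: I_def)
  have finJ: "finite J" by (rule finite_subset[of _ "{..<lP}"]) (auto simp: J_def)
  have cTm: "card (set T - {hd T}) = m - 1" using hT distinct_card[OF dT(1)] m_def by (simp add: card_Diff_singleton)
  have "{w\<in>V. E (hd T) w} \<subseteq> (set T - {hd T}) \<union> (\<lambda>i. P ! i) ` I"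
  proof
    fix w assume "w \<in> {w\<in>V. E (hd T) w}"
    then have e: "E (hd T) w" by simp
    show "w \<in> (set T - {hd T}) \<union> (\<lambda>i. P ! i) ` I"
    proof (cases "w \<in> set T")
      case True then show ?thesis using e Eirr by auto
    next
      case False
      then have "w \<in> set P" using nb1 e by blast
      then obtain k where k: "k < lP" "P ! k = w" by (metis in_set_conv_nth lP_def)
      then show ?thesis using e I_def by auto
    qed
  qed
  then have "degree V E (hd T) \<le> card ((set T - {hd T}) \<union> (\<lambda>i. P ! i) ` I)"
    unfolding degree_def using finI by (simp add: card_mono)
  also have "\<dots> \<le> card (set T - {hd T}) + card ((\<lambda>i. P ! i) ` I)" by (rule card_Un_le)
  also have "\<dots> \<le> (m - 1) + card I" using cTm card_image_le finI by simp
  finally have "degree V E (hd T) \<le> m - 1 + card I" .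
  moreover have "\<delta> \<le> degree V E (hd T)" using deg hT dT(3) by blast
  ultimately have cI: "\<delta> + 1 \<le> card I + m" using m1 by linarith
  have cTm': "card (set T - {last T}) = m - 1" using hT distinct_card[OF dT(1)] m_def by (simp add: card_Diff_singleton)
  have "{w\<in>V. E (last T) w} \<subseteq> (set T - {last T}) \<union> (\<lambda>i. P ! i) ` J"
  proof
    fix w assume "w \<in> {w\<in>V. E (last T) w}"
    then have e: "E (last T) w" by simp
    show "w \<in> (set T - {last T}) \<union> (\<lambda>i. P ! i) ` J"
    proof (cases "w \<in> set T")
      case True then show ?thesis using e Eirr by auto
    next
      case False
      then have "w \<in> set P" using nbm e by blast
      then obtain k where k: "k < lP" "P ! k = w" by (metis in_set_conv_nth lP_def)
      then show ?thesis using e J_def by auto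
    qed
  qed
  then have "degree V E (last T) \<le> card ((set T - {last T}) \<union> (\<lambda>i. P ! i) ` J)"
    unfolding degree_def using finJ by (simp add: card_mono)
  also have "\<dots> \<le> card (set T - {last T}) + card ((\<lambda>i. P ! i) ` J)" by (rule card_Un_le)
  also have "\<dots> \<le> (m - 1) + card J" using cTm' card_image_le finJ by simp
  finally have "degree V E (last T) \<le> m - 1 + card J" .
  moreover have "\<delta> \<le> degree V E (last T)" using deg hT dT(3) by blast
  ultimately have cJ: "\<delta> + 1 \<le> card J + m" using m1 by linarith
  have rT: "is_path V E (rev T)" using path_rev T(1) by blast
  have tk: "\<And>k. k < lP \<Longrightarrow> is_path V E (take (Suc k) P)" using path_take[OF P] by simp
  have dr: "\<And>k. k < lP \<Longrightarrow> is_path V E (drop k P)" using path_drop[OF P] lP_def by simp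
  have stk: "\<And>k. set (take k P) \<subseteq> set P" by (meson set_take_subset)
  have sdr: "\<And>k. set (drop k P) \<subseteq> set P" by (meson set_drop_subset)
  have shortI: "\<And>Z. is_path V E Z \<Longrightarrow> v \<in> set Z \<Longrightarrow> length Z < lP"
    using short lP_def by blast
  have aI: "m < i \<and> Suc i + m < lP" if i: "i \<in> I" for i
  proof
    have il: "i < lP" and e: "E (hd T) (P ! i)" using i I_def by auto
    have p1: "is_path V E (take (Suc i) P @ T)"
    proof (rule path_append)
      show "is_path V E (take (Suc i) P)" using tk il .
      show "is_path V E T" using T(1) .
      show "set (take (Suc i) P) \<inter> set T = {}" using stk[of "Suc i"] TP by blast
      show "E (last (take (Suc i) P)) (hd T)" using Esym[OF e] last_take_Suc[of i P] il lP_def by simp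
    qed
    have "length (take (Suc i) P @ T) < lP" using shortI[OF p1] T(3) by simp
    then show "Suc i + m < lP" using il lP_def m_def by simp
    have p2: "is_path V E (rev T @ drop i P)"
    proof (rule path_append)
      show "is_path V E (rev T)" using rT .
      show "is_path V E (drop i P)" using dr il .
      show "set (rev T) \<inter> set (drop i P) = {}" using sdr[of i] TP by auto
      show "E (last (rev T)) (hd (drop i P))" using e hd_drop_conv_nth[of i P] il lP_def by (simp add: last_rev)
    qed
    have "length (rev T @ drop i P) < lP" using shortI[OF p2] T(3) by simp
    then show "m < i" using il lP_def m_def by simp
  qed
  have aJ: "m < j \<and> Suc j + m < lP" if j: "j \<in> J" for j
  proof
    have jl: "j < lP" and e: "E (last T) (P ! j)" using j J_def by auto
    have p1: "is_path V E (take (Suc j) P @ rev T)"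
    proof (rule path_append)
      show "is_path V E (take (Suc j) P)" using tk jl .
      show "is_path V E (rev T)" using rT .
      show "set (take (Suc j) P) \<inter> set (rev T) = {}" using stk[of "Suc j"] TP by auto
      show "E (last (take (Suc j) P)) (hd (rev T))" using Esym[OF e] last_take_Suc[of j P] jl lP_def by (simp add: hd_rev)
    qed
    have "length (take (Suc j) P @ rev T) < lP" using shortI[OF p1] T(3) by simp
    then show "Suc j + m < lP" using jl lP_def m_def by simp
    have p2: "is_path V E (T @ drop j P)"
    proof (rule path_append)
      show "is_path V E T" using T(1) .
      show "is_path V E (drop j P)" using dr jl .
      show "set T \<inter> set (drop j P) = {}" using sdr[of j] TP by auto
      show "E (last T) (hd (drop j P))" using e hd_drop_conv_nth[of j P] jl lP_def by simp
    qed
    have "length (T @ drop j P) < lP" using shortI[OF p2] T(3) by simp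
    then show "m < j" using jl lP_def m_def by simp
  qed
  have bI: "Suc i \<notin> I" if i: "i \<in> I" for i
  proof
    assume si: "Suc i \<in> I"
    have il: "Suc i < lP" and e1: "E (hd T) (P ! i)" and e2: "E (hd T) (P ! Suc i)"
      using i si I_def by auto
    have "is_path V E (take (Suc i) P @ [hd T] @ drop (Suc i) P)"
    proof (rule path3)
      show "is_path V E (take (Suc i) P)" using tk il by simp
      show "is_path V E [hd T]" using path_single hT(1) dT(3) by blast
      show "is_path V E (drop (Suc i) P)" using dr il by simp
      show "set (take (Suc i) P) \<inter> set [hd T] = {}" using stk hTP by auto
      show "set (take (Suc i) P) \<inter> set (drop (Suc i) P) = {}"
        using set_take_disj_set_drop_if_distinct[OF dP(1)] by simp
      show "set [hd T] \<inter> set (drop (Suc i) P) = {}" using sdr hTP by auto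
      show "E (last (take (Suc i) P)) (hd [hd T])" using last_take_Suc[of i P] il lP_def Esym[OF e1] by simp
      show "E (last [hd T]) (hd (drop (Suc i) P))" using hd_drop_conv_nth[of "Suc i" P] il lP_def e2 by simp
    qed
    then have "length (take (Suc i) P @ [hd T] @ drop (Suc i) P) \<le> lP" using Plong lP_def by blast
    then show False using il lP_def by simp
  qed
  have cIJ: "Suc j + m < i" if i: "i \<in> I" and j: "j \<in> J" and ji: "j < i" for i j
  proof -
    have il: "i < lP" and e1: "E (hd T) (P ! i)" using i I_def by auto
    have jl: "j < lP" and e2: "E (last T) (P ! j)" using j J_def by auto
    have "is_path V E (take (Suc j) P @ rev T @ drop i P)"
    proof (rule path3)
      show "is_path V E (take (Suc j) P)" using tk jl by simp
      show "is_path V E (rev T)" using rT .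
      show "is_path V E (drop i P)" using dr il by simp
      show "set (take (Suc j) P) \<inter> set (rev T) = {}" using stk TP by auto
      show "set (take (Suc j) P) \<inter> set (drop i P) = {}"
        using set_take_disj_set_drop_if_distinct[OF dP(1)] ji by simp
      show "set (rev T) \<inter> set (drop i P) = {}" using sdr TP by auto
      show "E (last (take (Suc j) P)) (hd (rev T))" using last_take_Suc[of j P] jl lP_def Esym[OF e2] by (simp add: hd_rev)
      show "E (last (rev T)) (hd (drop i P))" using hd_drop_conv_nth[of i P] il lP_def e1 by (simp add: last_rev)
    qed
    moreover have "length (take (Suc j) P @ rev T @ drop i P) = Suc j + m + (lP - i)"
      using il jl lP_def m_def by simp
    moreover have "v \<in> set (take (Suc j) P @ rev T @ drop i P)" using T by simp
    ultimately have "Suc j + m + (lP - i) < lP" using shortI by metis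
    then show ?thesis using il by simp
  qed
  define X where "X = I \<union> Suc ` I \<union> (\<lambda>j. j + 2) ` J"
  have d1: "I \<inter> Suc ` I = {}" using bI by auto
  have d2: "(I \<union> Suc ` I) \<inter> (\<lambda>j. j + 2) ` J = {}"
  proof -
    have "x \<notin> (\<lambda>j. j + 2) ` J" if xI: "x \<in> I \<union> Suc ` I" for x
    proof
      assume "x \<in> (\<lambda>j. j + 2) ` J"
      then obtain j where j: "j \<in> J" "x = j + 2" by blast
      show False
      proof (cases "x \<in> I")
        case True then show False using cIJ[OF True j(1)] j m1 by simp
      next
        case False
        then obtain i where "i \<in> I" "x = Suc i" using xI by blast
        then show False using cIJ[of i j] j m1 by simp
      qed
    qed
    then show ?thesis by blast
  qed
  have "card X = card I + card I + card J"
  proof -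
    have "card X = card (I \<union> Suc ` I) + card ((\<lambda>j. j + 2) ` J)"
      unfolding X_def using d2 finI finJ by (simp add: card_Un_disjoint)
    also have "card (I \<union> Suc ` I) = card I + card (Suc ` I)"
      using d1 finI by (simp add: card_Un_disjoint)
    also have "card (Suc ` I) = card I" by (simp add: card_image)
    also have "card ((\<lambda>j. j + 2) ` J) = card J" by (simp add: card_image inj_on_def)
    finally show ?thesis .
  qed
  moreover have "X \<subseteq> {Suc m .. lP - m}"
  proof
    fix x assume "x \<in> X"
    then consider (a) "x \<in> I" | (b) i where "i \<in> I" "x = Suc i" | (c) j where "j \<in> J" "x = j + 2"
      unfolding X_def by blast
    then show "x \<in> {Suc m .. lP - m}"
    proof cases
      case a then show ?thesis using aI[OF a] by auto
    next
      case (b i) then show ?thesis using aI[OF b(1)] by auto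
    next
      case (c j) then show ?thesis using aJ[OF c(1)] by auto
    qed
  qed
  then have "card X \<le> card {Suc m .. lP - m}" by (intro card_mono) auto
  ultimately have "card I + card I + card J \<le> Suc (lP - m) - Suc m" by simp
  then show False using cI cJ lm nV mle by linarith
qed

end

theorem theorem5:
  fixes V :: "'a set" and E :: "'a \<Rightarrow> 'a \<Rightarrow> bool" and n :: nat
  assumes "simple_graph V E"
    and "connected V E"
    and "n = card V"
    and "\<forall>v\<in>V. 3 * int (degree V E v) \<ge> int n - 2"
  shows "detour_covered V E"
proof -
  have sg: "simple_graph V E" using assms(1) .
  define \<delta> where "\<delta> = card V div 3"
  have nV: "card V \<le> 3*\<delta>+2" unfolding \<delta>_def by presburger
  have deg: "\<forall>u\<in>V. \<delta> \<le> degree V E u"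
  proof
    fix u assume "u \<in> V"
    then have "3 * int (degree V E u) \<ge> int (card V) - 2" using assms(3,4) by blast
    then have "card V \<le> 3 * degree V E u + 2" by linarith
    then show "\<delta> \<le> degree V E u" unfolding \<delta>_def by presburger
  qed
  show ?thesis unfolding detour_covered_def
  proof
    fix v assume vV: "v \<in> V"
    show "\<exists>p. detour V E p \<and> v \<in> set p"
    proof (rule ccontr)
      assume nd: "\<not> (\<exists>p. detour V E p \<and> v \<in> set p)"
      obtain P where P: "is_path V E P"
        and Plong: "\<forall>Z. is_path V E Z \<longrightarrow> length Z \<le> length P"
        using exists_max_path[OF sg, of "[v]" "\<lambda>_. True"] path_single[OF sg] vV by auto
      have short: "\<forall>Z. is_path V E Z \<and> v \<in> set Z \<longrightarrow> length Z < length P"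
      proof (intro allI impI, rule ccontr)
        fix Z assume Z: "is_path V E Z \<and> v \<in> set Z" "\<not> length Z < length P"
        have "detour V E Z" unfolding detour_def path_len_def
          using Z Plong by (metis diff_le_mono le_antisym not_le)
        then show False using nd Z by blast
      qed
      show False using main_contra[OF sg assms(2) P Plong vV short deg nV] .
    qed
  qed
qed

end
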